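(* Let $\langle A,\to\rangle$ be a conditional algebra, and write $T=T_A$, with $u,v,w$ ranging over $\mathrm{Ul}(A)$ and $Y,Z$ over closed subsets of the Stone space $\mathrm{Ul}(A)$. Then: (A4) $a\to b\le c\to(a\to b)$ holds for all $a,b,c\in A$ iff for all $u,v,w,Y,Z$: $T(u,Y,v)$ and $T(v,Z,w)$ imply $T(u,Z,w)$; (A5) $a\wedge(a\to b)\le b$ holds for all $a,b$ iff $T(u,\{u\},u)$ for all $u$; (A6) $a\to b\le\neg b\to\neg a$ holds for all $a,b$ iff for all $u,v,Y$: $T(u,Y,v)$ implies there is $w\in Y$ with $T(u,\{v\},w)$; (A7) $\neg(a\to b)\le c\to\neg(a\to b)$ holds for all $a,b,c$ iff for all $u,v,w,Y,Z$: $T(u,Y,v)$ and $T(u,Z,w)$ imply $T(v,Z,w)$; (A8) $(1\to(\neg a\vee b))\wedge(b\to c)\le a\to c$ holds for all $a,b,c$ iff for all $u,v,Y,Z$: if $T(u,Y,v)$ and $T(u,\mathrm{Ul}(A))\cap Y\subseteq Z$, then $T(u,Z,v)$.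
   Context: A conditional algebra is $\langle A,\to\rangle$ with $A$ a Boolean algebra and $\to$ binary with $a\to1=1$, $(a\to b)\wedge(a\to c)=a\to(b\wedge c)$, $(a\vee b)\to c\le(a\to c)\wedge(b\to c)$. $\mathrm{Ul}(A)$ is the Stone space of ultrafilters; its closed sets are the $\varphi(F)=\{u:F\subseteq u\}$ for filters $F$ (including $F=A$, giving $\emptyset$). $D^{\to}_u(F)=\{b:\exists a\in F,\ a\to b\in u\}$; $T_A(u,Z,v)$ iff there is a filter $F$ with $Z=\varphi(F)$ and $D^{\to}_u(F)\subseteq v$; $T_A(u,Z)=\{v:T_A(u,Z,v)\}$. *)

theory Defs
  imports Main
begin

definition conditional_algebra :: "('a::boolean_algebra \<Rightarrow> 'a \<Rightarrow> 'a) \<Rightarrow> bool" where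
  "conditional_algebra imp \<longleftrightarrow>
     (\<forall>a. imp a top = top) \<and>
     (\<forall>a b c. inf (imp a b) (imp a c) = imp a (inf b c)) \<and>
     (\<forall>a b c. imp (sup a b) c \<le> inf (imp a c) (imp b c))"

text \<open>Filters of a Boolean algebra (the whole algebra counts as a filter).\<close>

definition is_filter :: "'a::boolean_algebra set \<Rightarrow> bool" where
  "is_filter F \<longleftrightarrow> top \<in> F \<and>
     (\<forall>a b. a \<in> F \<longrightarrow> a \<le> b \<longrightarrow> b \<in> F) \<and>
     (\<forall>a b. a \<in> F \<longrightarrow> b \<in> F \<longrightarrow> inf a b \<in> F)"

definition ultrafilter :: "'a::boolean_algebra set \<Rightarrow> bool" where
  "ultrafilter u \<longleftrightarrow> is_filter u \<and> bot \<notin> u \<and>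
     (\<forall>G. is_filter G \<and> bot \<notin> G \<and> u \<subseteq> G \<longrightarrow> G = u)"

definition Ul :: "'a::boolean_algebra set set" where
  "Ul = {u. ultrafilter u}"

definition phi :: "'a::boolean_algebra set \<Rightarrow> 'a set set" where
  "phi F = {u. ultrafilter u \<and> F \<subseteq> u}"

definition closed_Ul :: "'a::boolean_algebra set set \<Rightarrow> bool" where
  "closed_Ul Z \<longleftrightarrow> (\<exists>F. is_filter F \<and> Z = phi F)"

definition Dimp :: "('a::boolean_algebra \<Rightarrow> 'a \<Rightarrow> 'a) \<Rightarrow> 'a set \<Rightarrow> 'a set \<Rightarrow> 'a set" where
  "Dimp imp u F = {b. \<exists>a\<in>F. imp a b \<in> u}"

definition TA :: "('a::boolean_algebra \<Rightarrow> 'a \<Rightarrow> 'a) \<Rightarrow> 'a set \<Rightarrow> 'a set set \<Rightarrow> 'a set \<Rightarrow> bool" where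
  "TA imp u Z v \<longleftrightarrow> (\<exists>F. is_filter F \<and> Z = phi F \<and> Dimp imp u F \<subseteq> v)"

definition TAset :: "('a::boolean_algebra \<Rightarrow> 'a \<Rightarrow> 'a) \<Rightarrow> 'a set \<Rightarrow> 'a set set \<Rightarrow> 'a set set" where
  "TAset imp u Z = {v. ultrafilter v \<and> TA imp u Z v}"

end

theory Submission
  imports Defs
begin

lemma ca_top: "conditional_algebra imp \<Longrightarrow> imp a top = top"
  by (simp add: conditional_algebra_def)

lemma ca_inf: "conditional_algebra imp \<Longrightarrow> inf (imp a b) (imp a c) = imp a (inf b c)"
  by (simp add: conditional_algebra_def)

lemma ca_sup: "conditional_algebra imp \<Longrightarrow> imp (sup a b) c \<le> inf (imp a c) (imp b c)"
  by (simp add: conditional_algebra_def)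

lemma ca_mono:
  assumes "conditional_algebra imp" "b \<le> c" shows "imp a b \<le> imp a c"
proof -
  have "imp a b = imp a (inf b c)" using assms(2) by (simp add: inf_absorb1)
  also have "\<dots> = inf (imp a b) (imp a c)" using ca_inf[OF assms(1)] by simp
  finally show ?thesis by (metis inf.orderI)
qed

lemma ca_anti:
  assumes "conditional_algebra imp" "a \<le> a'" shows "imp a' b \<le> imp a b"
proof -
  have "imp a' b = imp (sup a a') b" using assms(2) by (simp add: sup_absorb2)
  also have "\<dots> \<le> inf (imp a b) (imp a' b)" using ca_sup[OF assms(1)] by simp
  finally show ?thesis by simp
qed

lemma filter_top: "is_filter F \<Longrightarrow> top \<in> F"
  by (simp add: is_filter_def)
lemma filter_up: "is_filter F \<Longrightarrow> a \<in> F \<Longrightarrow> a \<le> b \<Longrightarrow> b \<in> F"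
  by (simp add: is_filter_def)
lemma filter_inf: "is_filter F \<Longrightarrow> a \<in> F \<Longrightarrow> b \<in> F \<Longrightarrow> inf a b \<in> F"
  by (simp add: is_filter_def)
lemma filter_inf_iff: "is_filter F \<Longrightarrow> inf a b \<in> F \<longleftrightarrow> a \<in> F \<and> b \<in> F"
  by (meson filter_inf filter_up inf_le1 inf_le2)

lemma uf_filter: "ultrafilter u \<Longrightarrow> is_filter u"
  by (simp add: ultrafilter_def)
lemma uf_bot: "ultrafilter u \<Longrightarrow> bot \<notin> u"
  by (simp add: ultrafilter_def)
lemma uf_max: "ultrafilter u \<Longrightarrow> is_filter G \<Longrightarrow> bot \<notin> G \<Longrightarrow> u \<subseteq> G \<Longrightarrow> G = u"
  by (simp add: ultrafilter_def)

definition gen :: "'a::boolean_algebra set \<Rightarrow> 'a \<Rightarrow> 'a set" where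
  "gen M y = {z. \<exists>m\<in>M. inf m y \<le> z}"

lemma gen_filter: assumes "is_filter M" shows "is_filter (gen M y)"
  unfolding is_filter_def gen_def
proof (intro conjI allI impI)
  show "top \<in> {z. \<exists>m\<in>M. inf m y \<le> z}" using filter_top[OF assms] by auto
next
  fix a b assume "a \<in> {z. \<exists>m\<in>M. inf m y \<le> z}" "a \<le> b"
  then obtain m where "m \<in> M" "inf m y \<le> a" by blast
  moreover have "inf m y \<le> b" using \<open>inf m y \<le> a\<close> \<open>a \<le> b\<close> by (rule order_trans)
  ultimately show "b \<in> {z. \<exists>m\<in>M. inf m y \<le> z}" by blast
next
  fix a b assume "a \<in> {z. \<exists>m\<in>M. inf m y \<le> z}" "b \<in> {z. \<exists>m\<in>M. inf m y \<le> z}"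
  then obtain m1 m2 where m: "m1 \<in> M" "m2 \<in> M" "inf m1 y \<le> a" "inf m2 y \<le> b" by blast
  have "inf (inf m1 m2) y \<le> inf m1 y" by (rule inf_mono) simp_all
  hence 1: "inf (inf m1 m2) y \<le> a" using m(3) by (rule order_trans)
  have "inf (inf m1 m2) y \<le> inf m2 y" by (rule inf_mono) simp_all
  hence 2: "inf (inf m1 m2) y \<le> b" using m(4) by (rule order_trans)
  have "inf (inf m1 m2) y \<le> inf a b" using 1 2 by (rule le_infI)
  moreover have "inf m1 m2 \<in> M" using filter_inf[OF assms m(1,2)] .
  ultimately show "inf a b \<in> {z. \<exists>m\<in>M. inf m y \<le> z}" by blast
qed

lemma gen_sup: "M \<subseteq> gen M y"
proof
  fix m assume "m \<in> M"
  moreover have "inf m y \<le> m" by simp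
  ultimately show "m \<in> gen M y" unfolding gen_def by blast
qed
lemma gen_y: assumes "is_filter M" shows "y \<in> gen M y"
proof -
  have "top \<in> M" using assms by (rule filter_top)
  moreover have "inf top y \<le> y" by simp
  ultimately show ?thesis unfolding gen_def by blast
qed

lemma uf_prime: assumes "ultrafilter u" shows "x \<in> u \<or> -x \<in> u"
proof (rule ccontr)
  assume H: "\<not> (x \<in> u \<or> -x \<in> u)"
  have f: "is_filter (gen u x)" using gen_filter uf_filter assms by blast
  have "gen u x \<noteq> u" using gen_y[OF uf_filter[OF assms]] H by blast
  hence "bot \<in> gen u x" using uf_max[OF assms f] gen_sup by blast
  then obtain m where "m \<in> u" "inf m x \<le> bot" unfolding gen_def by blast
  hence "inf m x = bot" by (simp add: bot_unique)
  hence "m \<le> -x" by (simp only: inf_shunt)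
  hence "-x \<in> u" using \<open>m \<in> u\<close> filter_up uf_filter assms by blast
  thus False using H by blast
qed

lemma uf_compl: assumes "ultrafilter u" shows "(-x \<in> u) = (x \<notin> u)"
proof
  assume "-x \<in> u"
  show "x \<notin> u"
  proof
    assume "x \<in> u"
    hence "inf x (-x) \<in> u" by (rule filter_inf[OF uf_filter[OF assms] _ \<open>-x \<in> u\<close>])
    thus False using uf_bot[OF assms] by simp
  qed
next
  assume "x \<notin> u" thus "-x \<in> u" using uf_prime[OF assms, of x] by blast
qed

lemma uf_thm:
  assumes F: "is_filter F" and a: "a \<notin> F"
  shows "\<exists>u. ultrafilter u \<and> F \<subseteq> u \<and> a \<notin> u"
proof -
  define A where "A = {G. is_filter G \<and> F \<subseteq> G \<and> a \<notin> G}"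
  have "\<exists>M\<in>A. \<forall>X\<in>A. M \<subseteq> X \<longrightarrow> X = M"
  proof (rule Zorn_Lemma2, intro ballI)
    fix C assume C: "C \<in> chains A"
    show "\<exists>U\<in>A. \<forall>X\<in>C. X \<subseteq> U"
    proof (cases "C = {}")
      case True
      have "F \<in> A" using assms unfolding A_def by blast
      then show ?thesis using True by blast
    next
      case False
      have CA: "C \<subseteq> A" using C by (simp add: chains_def)
      have hC: "is_filter G \<and> F \<subseteq> G \<and> a \<notin> G" if "G \<in> C" for G
        using CA that unfolding A_def by blast
      have ch: "\<forall>X\<in>C. \<forall>Y\<in>C. X \<subseteq> Y \<or> Y \<subseteq> X"
        using C by (simp add: chains_def chain_subset_def)
      have "is_filter (\<Union>C)"
        unfolding is_filter_def
      proof (intro conjI allI impI)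
        obtain G where "G \<in> C" using False by blast
        then show "top \<in> \<Union>C" using hC filter_top by blast
      next
        fix x y assume "x \<in> \<Union>C" "x \<le> y"
        then obtain G where "G \<in> C" "x \<in> G" by blast
        then show "y \<in> \<Union>C" using hC filter_up \<open>x \<le> y\<close> by blast
      next
        fix x y assume "x \<in> \<Union>C" "y \<in> \<Union>C"
        then obtain G1 G2 where g: "G1 \<in> C" "G2 \<in> C" "x \<in> G1" "y \<in> G2" by blast
        show "inf x y \<in> \<Union>C"
        proof (cases "G1 \<subseteq> G2")
          case True
          then show ?thesis using g hC filter_inf by blast
        next
          case False
          then have "G2 \<subseteq> G1" using ch g by blast
          then show ?thesis using g hC filter_inf by blast
        qed
      qed
      moreover have "F \<subseteq> \<Union>C" using False hC by blast
      moreover have "a \<notin> \<Union>C" using hC by blast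
      ultimately have "\<Union>C \<in> A" unfolding A_def by blast
      then show ?thesis by blast
    qed
  qed
  then obtain M where M: "M \<in> A" and mx: "\<forall>X\<in>A. M \<subseteq> X \<longrightarrow> X = M" by blast
  have Mf: "is_filter M" and FM: "F \<subseteq> M" and aM: "a \<notin> M" using M unfolding A_def by auto
  have key: "\<exists>m\<in>M. inf m y \<le> a" if "y \<notin> M" for y
  proof -
    have "a \<in> gen M y"
    proof (rule ccontr)
      assume "a \<notin> gen M y"
      moreover have "F \<subseteq> gen M y" using gen_sup FM by blast
      ultimately have "gen M y \<in> A" unfolding A_def using gen_filter[OF Mf] by blast
      hence "gen M y = M" using mx gen_sup[of M y] by blast
      thus False using gen_y[OF Mf] that by blast
    qed
    thus ?thesis unfolding gen_def by blast
  qed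
  have prime: "y \<in> M \<or> -y \<in> M" for y
  proof (rule ccontr)
    assume H: "\<not> (y \<in> M \<or> -y \<in> M)"
    obtain m1 where m1: "m1 \<in> M" "inf m1 y \<le> a" using key H by blast
    obtain m2 where m2: "m2 \<in> M" "inf m2 (-y) \<le> a" using key H by blast
    have "inf m1 m2 \<le> a"
    proof -
      have h1: "m1 \<le> sup (-y) a" using m1(2) by (simp only: shunt1)
      have h2: "m2 \<le> sup y a" using m2(2) by (simp only: shunt2)
      have "inf m1 m2 \<le> sup (-y) a" using h1 by (rule le_infI1)
      moreover have "inf m1 m2 \<le> sup y a" using h2 by (rule le_infI2)
      ultimately have "inf m1 m2 \<le> inf (sup (-y) a) (sup y a)" by simp
      also have "\<dots> = sup (inf (-y) y) a" by (rule sup_inf_distrib2[symmetric])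
      also have "\<dots> = a" by simp
      finally show ?thesis .
    qed
    hence "a \<in> M" by (rule filter_up[OF Mf filter_inf[OF Mf m1(1) m2(1)]])
    thus False using aM by blast
  qed
  have "ultrafilter M"
    unfolding ultrafilter_def
  proof (intro conjI allI impI)
    show "is_filter M" by (rule Mf)
    show "bot \<notin> M"
    proof
      assume "bot \<in> M"
      then have "a \<in> M" by (rule filter_up[OF Mf]) simp
      with aM show False by blast
    qed
  next
    fix G assume G: "is_filter G \<and> bot \<notin> G \<and> M \<subseteq> G"
    show "G = M"
    proof
      show "G \<subseteq> M"
      proof
        fix y assume "y \<in> G"
        show "y \<in> M"
        proof (rule ccontr)
          assume "y \<notin> M"
          hence "-y \<in> M" using prime by blast
          hence "-y \<in> G" using G by blast
          have Gf: "is_filter G" using G by blast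
          have "inf y (-y) \<in> G" by (rule filter_inf[OF Gf \<open>y \<in> G\<close> \<open>-y \<in> G\<close>])
          thus False using G by simp
        qed
      qed
      show "M \<subseteq> G" using G by blast
    qed
  qed
  thus ?thesis using FM aM by blast
qed


definition up :: "'a::boolean_algebra \<Rightarrow> 'a set" where "up x = {y. x \<le> y}"

lemma up_filter: "is_filter (up x)"
  unfolding is_filter_def
proof (intro conjI allI impI)
  show "top \<in> up x" by (simp add: up_def)
next
  fix a b assume "a \<in> up x" "a \<le> b"
  then show "b \<in> up x" unfolding up_def using order_trans by blast
next
  fix a b assume "a \<in> up x" "b \<in> up x"
  then show "inf a b \<in> up x" unfolding up_def by simp
qed

lemma up_self: "x \<in> up x" by (simp add: up_def)

lemma sep: assumes "\<not> x \<le> y" shows "\<exists>u. ultrafilter u \<and> x \<in> u \<and> y \<notin> u"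
proof -
  have "y \<notin> up x" using assms by (simp add: up_def)
  then obtain u where "ultrafilter u" "up x \<subseteq> u" "y \<notin> u" using uf_thm[OF up_filter] by blast
  thus ?thesis using up_self by blast
qed

lemma in_phi: "w \<in> phi F \<longleftrightarrow> ultrafilter w \<and> F \<subseteq> w" by (simp add: phi_def)

lemma phi_sub: assumes F: "is_filter F" and H: "is_filter H" and s: "phi H \<subseteq> phi F" shows "F \<subseteq> H"
proof
  fix x assume x: "x \<in> F"
  show "x \<in> H"
  proof (rule ccontr)
    assume "x \<notin> H"
    then obtain w where w: "ultrafilter w" "H \<subseteq> w" "x \<notin> w" using uf_thm[OF H] by blast
    hence "w \<in> phi H" by (simp add: in_phi)
    hence "w \<in> phi F" using s by blast
    hence "F \<subseteq> w" by (simp add: in_phi)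
    thus False using x w(3) by blast
  qed
qed

lemma phi_inj: "is_filter F \<Longrightarrow> is_filter G \<Longrightarrow> phi F = phi G \<Longrightarrow> F = G"
  using phi_sub[of F G] phi_sub[of G F] by blast

lemma phi_anti: "A \<subseteq> B \<Longrightarrow> phi B \<subseteq> phi A"
  unfolding phi_def by blast

lemma TA_phi: assumes "is_filter F" shows "TA imp u (phi F) v \<longleftrightarrow> Dimp imp u F \<subseteq> v"
proof
  assume "TA imp u (phi F) v"
  then obtain G where G: "is_filter G" "phi F = phi G" "Dimp imp u G \<subseteq> v" unfolding TA_def by blast
  have "F = G" using phi_inj[OF assms G(1) G(2)] .
  thus "Dimp imp u F \<subseteq> v" using G(3) by simp
next
  assume "Dimp imp u F \<subseteq> v" thus "TA imp u (phi F) v" unfolding TA_def using assms by blast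
qed

lemma D_filter: assumes ca: "conditional_algebra imp" and u: "is_filter u" and F: "is_filter F"
  shows "is_filter (Dimp imp u F)"
  unfolding is_filter_def
proof (intro conjI allI impI)
  have "imp top top \<in> u" using ca_top[OF ca] filter_top[OF u] by simp
  thus "top \<in> Dimp imp u F" unfolding Dimp_def using filter_top[OF F] by blast
next
  fix a b assume "a \<in> Dimp imp u F" "a \<le> b"
  then obtain c where c: "c \<in> F" "imp c a \<in> u" unfolding Dimp_def by blast
  have "imp c a \<le> imp c b" using ca_mono[OF ca \<open>a \<le> b\<close>] .
  hence "imp c b \<in> u" by (rule filter_up[OF u c(2)])
  thus "b \<in> Dimp imp u F" unfolding Dimp_def using c(1) by blast
next
  fix a b assume "a \<in> Dimp imp u F" "b \<in> Dimp imp u F"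
  then obtain c d where c: "c \<in> F" "imp c a \<in> u" and d: "d \<in> F" "imp d b \<in> u"
    unfolding Dimp_def by blast
  have 1: "imp (inf c d) a \<in> u" by (rule filter_up[OF u c(2) ca_anti[OF ca inf_le1]])
  have 2: "imp (inf c d) b \<in> u" by (rule filter_up[OF u d(2) ca_anti[OF ca inf_le2]])
  have "inf (imp (inf c d) a) (imp (inf c d) b) \<in> u" by (rule filter_inf[OF u 1 2])
  hence "imp (inf c d) (inf a b) \<in> u" using ca_inf[OF ca] by simp
  thus "inf a b \<in> Dimp imp u F" unfolding Dimp_def using filter_inf[OF F c(1) d(1)] by blast
qed

lemma D_up: assumes ca: "conditional_algebra imp" and u: "is_filter u"
  shows "Dimp imp u (up c) = {y. imp c y \<in> u}"
proof (rule set_eqI)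
  fix y show "y \<in> Dimp imp u (up c) \<longleftrightarrow> y \<in> {y. imp c y \<in> u}"
  proof
    assume "y \<in> Dimp imp u (up c)"
    then obtain c' where c': "c \<le> c'" "imp c' y \<in> u" unfolding Dimp_def up_def by blast
    have "imp c y \<in> u" by (rule filter_up[OF u c'(2) ca_anti[OF ca c'(1)]])
    thus "y \<in> {y. imp c y \<in> u}" by simp
  next
    assume "y \<in> {y. imp c y \<in> u}"
    thus "y \<in> Dimp imp u (up c)" unfolding Dimp_def using up_self[of c] by blast
  qed
qed

lemma phi_uf: assumes u: "ultrafilter u" shows "{u} = phi u"
proof (rule set_eqI)
  fix w show "w \<in> {u} \<longleftrightarrow> w \<in> phi u"
  proof
    assume "w \<in> {u}" thus "w \<in> phi u" using u by (simp add: in_phi)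
  next
    assume "w \<in> phi u"
    hence w: "ultrafilter w" "u \<subseteq> w" by (simp_all add: in_phi)
    have "w = u" by (rule uf_max[OF u uf_filter[OF w(1)] uf_bot[OF w(1)] w(2)])
    thus "w \<in> {u}" by simp
  qed
qed

lemma top_filter: "is_filter {top}"
  unfolding is_filter_def by (auto simp: top_unique)

lemma Ul_phi: "Ul = phi {top}"
  unfolding Ul_def phi_def using filter_top uf_filter by blast

lemma closed_phi: "is_filter F \<Longrightarrow> closed_Ul (phi F)"
  unfolding closed_Ul_def by blast

lemma Ul_uf: "u \<in> Ul \<longleftrightarrow> ultrafilter u" by (simp add: Ul_def)

definition jn :: "'a::boolean_algebra set \<Rightarrow> 'a set \<Rightarrow> 'a set" where
  "jn E G = {x. \<exists>e\<in>E. \<exists>g\<in>G. inf e g \<le> x}"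

lemma jn_filter: assumes E: "is_filter E" and G: "is_filter G" shows "is_filter (jn E G)"
  unfolding is_filter_def
proof (intro conjI allI impI)
  have "inf top top \<le> (top::'a)" by simp
  thus "top \<in> jn E G" unfolding jn_def using filter_top[OF E] filter_top[OF G] by blast
next
  fix x y assume "x \<in> jn E G" "x \<le> y"
  then obtain e g where h: "e \<in> E" "g \<in> G" "inf e g \<le> x" unfolding jn_def by blast
  have "inf e g \<le> y" using h(3) \<open>x \<le> y\<close> by (rule order_trans)
  thus "y \<in> jn E G" unfolding jn_def using h(1,2) by blast
next
  fix x y assume "x \<in> jn E G" "y \<in> jn E G"
  then obtain e1 g1 e2 g2 where h: "e1 \<in> E" "g1 \<in> G" "inf e1 g1 \<le> x"
      "e2 \<in> E" "g2 \<in> G" "inf e2 g2 \<le> y" unfolding jn_def by blast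
  have "inf (inf e1 e2) (inf g1 g2) \<le> inf e1 g1" by (rule inf_mono) simp_all
  hence 1: "inf (inf e1 e2) (inf g1 g2) \<le> x" using h(3) by (rule order_trans)
  have "inf (inf e1 e2) (inf g1 g2) \<le> inf e2 g2" by (rule inf_mono) simp_all
  hence 2: "inf (inf e1 e2) (inf g1 g2) \<le> y" using h(6) by (rule order_trans)
  have "inf (inf e1 e2) (inf g1 g2) \<le> inf x y" using 1 2 by (rule le_infI)
  moreover have "inf e1 e2 \<in> E" by (rule filter_inf[OF E h(1) h(4)])
  moreover have "inf g1 g2 \<in> G" by (rule filter_inf[OF G h(2) h(5)])
  ultimately show "inf x y \<in> jn E G" unfolding jn_def by blast
qed

lemma jn_sub1: assumes "is_filter G" shows "E \<subseteq> jn E G"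
proof
  fix e assume "e \<in> E"
  moreover have "inf e top \<le> e" by simp
  ultimately show "e \<in> jn E G" unfolding jn_def using filter_top[OF assms] by blast
qed

lemma jn_sub2: assumes "is_filter E" shows "G \<subseteq> jn E G"
proof
  fix g assume "g \<in> G"
  moreover have "inf top g \<le> g" by simp
  ultimately show "g \<in> jn E G" unfolding jn_def using filter_top[OF assms] by blast
qed

lemma TAset_eq: assumes ca: "conditional_algebra imp" and u: "ultrafilter u"
  shows "TAset imp u Ul = phi (Dimp imp u {top})"
proof (rule set_eqI)
  fix v
  have "v \<in> TAset imp u Ul \<longleftrightarrow> ultrafilter v \<and> TA imp u (phi {top}) v"
    unfolding TAset_def Ul_phi by simp
  also have "\<dots> \<longleftrightarrow> ultrafilter v \<and> Dimp imp u {top} \<subseteq> v"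
    using TA_phi[OF top_filter, of imp u v] by blast
  also have "\<dots> \<longleftrightarrow> v \<in> phi (Dimp imp u {top})" by (simp add: in_phi)
  finally show "v \<in> TAset imp u Ul \<longleftrightarrow> v \<in> phi (Dimp imp u {top})" .
qed


lemma A4:
  assumes ca: "conditional_algebra imp"
  shows "(\<forall>a b c. imp a b \<le> imp c (imp a b)) \<longleftrightarrow>
      (\<forall>u\<in>Ul. \<forall>v\<in>Ul. \<forall>w\<in>Ul. \<forall>Y Z. closed_Ul Y \<longrightarrow> closed_Ul Z \<longrightarrow>
         TA imp u Y v \<longrightarrow> TA imp v Z w \<longrightarrow> TA imp u Z w)"
proof
  assume H: "\<forall>a b c. imp a b \<le> imp c (imp a b)"
  show "\<forall>u\<in>Ul. \<forall>v\<in>Ul. \<forall>w\<in>Ul. \<forall>Y Z. closed_Ul Y \<longrightarrow> closed_Ul Z \<longrightarrow>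
         TA imp u Y v \<longrightarrow> TA imp v Z w \<longrightarrow> TA imp u Z w"
  proof (intro ballI allI impI)
    fix u v w Y Z
    assume u: "u \<in> Ul" and v: "v \<in> Ul" and w: "w \<in> Ul" and Y: "closed_Ul Y" and Z: "closed_Ul Z"
      and T1: "TA imp u Y v" and T2: "TA imp v Z w"
    have uu: "ultrafilter u" using u by (simp add: Ul_uf)
    obtain G where G: "is_filter G" "Y = phi G" using Y unfolding closed_Ul_def by blast
    obtain F where F: "is_filter F" "Z = phi F" using Z unfolding closed_Ul_def by blast
    have D1: "Dimp imp u G \<subseteq> v" using T1 TA_phi[OF G(1)] G(2) by simp
    have D2: "Dimp imp v F \<subseteq> w" using T2 TA_phi[OF F(1)] F(2) by simp
    have "Dimp imp u F \<subseteq> w"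
    proof
      fix b assume "b \<in> Dimp imp u F"
      then obtain a where a: "a \<in> F" "imp a b \<in> u" unfolding Dimp_def by blast
      have "imp a b \<le> imp top (imp a b)" using H by blast
      hence "imp top (imp a b) \<in> u" by (rule filter_up[OF uf_filter[OF uu] a(2)])
      hence "imp a b \<in> Dimp imp u G" unfolding Dimp_def using filter_top[OF G(1)] by blast
      hence "imp a b \<in> v" using D1 by blast
      thus "b \<in> w" using D2 a(1) unfolding Dimp_def by blast
    qed
    thus "TA imp u Z w" using TA_phi[OF F(1)] F(2) by simp
  qed
next
  assume H: "\<forall>u\<in>Ul. \<forall>v\<in>Ul. \<forall>w\<in>Ul. \<forall>Y Z. closed_Ul Y \<longrightarrow> closed_Ul Z \<longrightarrow>
         TA imp u Y v \<longrightarrow> TA imp v Z w \<longrightarrow> TA imp u Z w"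
  show "\<forall>a b c. imp a b \<le> imp c (imp a b)"
  proof (intro allI, rule ccontr)
    fix a b c assume "\<not> imp a b \<le> imp c (imp a b)"
    then obtain u where u: "ultrafilter u" "imp a b \<in> u" "imp c (imp a b) \<notin> u" using sep by blast
    have uf: "is_filter u" using uf_filter[OF u(1)] .
    have Df: "is_filter (Dimp imp u (up c))" by (rule D_filter[OF ca uf up_filter])
    have "imp a b \<notin> Dimp imp u (up c)" using D_up[OF ca uf] u(3) by simp
    then obtain v where v: "ultrafilter v" "Dimp imp u (up c) \<subseteq> v" "imp a b \<notin> v"
      using uf_thm[OF Df] by blast
    have vf: "is_filter v" using uf_filter[OF v(1)] .
    have Df2: "is_filter (Dimp imp v (up a))" by (rule D_filter[OF ca vf up_filter])
    have "b \<notin> Dimp imp v (up a)" using D_up[OF ca vf] v(3) by simp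
    then obtain w where w: "ultrafilter w" "Dimp imp v (up a) \<subseteq> w" "b \<notin> w"
      using uf_thm[OF Df2] by blast
    have T1: "TA imp u (phi (up c)) v" using v(2) by (simp add: TA_phi[OF up_filter])
    have T2: "TA imp v (phi (up a)) w" using w(2) by (simp add: TA_phi[OF up_filter])
    have "TA imp u (phi (up a)) w"
      by (rule H[rule_format, OF Ul_uf[THEN iffD2, OF u(1)] Ul_uf[THEN iffD2, OF v(1)] Ul_uf[THEN iffD2, OF w(1)] closed_phi[OF up_filter] closed_phi[OF up_filter] T1 T2])
    hence "Dimp imp u (up a) \<subseteq> w" by (simp add: TA_phi[OF up_filter])
    moreover have "b \<in> Dimp imp u (up a)" using D_up[OF ca uf] u(2) by simp
    ultimately show False using w(3) by blast
  qed
qed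

lemma A5:
  assumes ca: "conditional_algebra imp"
  shows "(\<forall>a b. inf a (imp a b) \<le> b) \<longleftrightarrow> (\<forall>u\<in>Ul. TA imp u {u} u)"
proof
  assume H: "\<forall>a b. inf a (imp a b) \<le> b"
  show "\<forall>u\<in>Ul. TA imp u {u} u"
  proof
    fix u :: "'a set" assume "u \<in> Ul" hence u: "ultrafilter u" by (simp add: Ul_uf)
    have uf: "is_filter u" using uf_filter[OF u] .
    have "Dimp imp u u \<subseteq> u"
    proof
      fix b assume "b \<in> Dimp imp u u"
      then obtain a where a: "a \<in> u" "imp a b \<in> u" unfolding Dimp_def by blast
      have "inf a (imp a b) \<in> u" by (rule filter_inf[OF uf a(1) a(2)])
      moreover have "inf a (imp a b) \<le> b" using H by blast
      ultimately show "b \<in> u" by (rule filter_up[OF uf])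
    qed
    thus "TA imp u {u} u" unfolding phi_uf[OF u] TA_phi[OF uf] .
  qed
next
  assume H: "\<forall>u\<in>Ul. TA imp u {u} u"
  show "\<forall>a b. inf a (imp a b) \<le> b"
  proof (intro allI, rule ccontr)
    fix a b assume "\<not> inf a (imp a b) \<le> b"
    then obtain u where u: "ultrafilter u" "inf a (imp a b) \<in> u" "b \<notin> u" using sep by blast
    have uf: "is_filter u" using uf_filter[OF u(1)] .
    have "TA imp u {u} u" using H u(1) by (simp add: Ul_uf)
    hence "Dimp imp u u \<subseteq> u" unfolding phi_uf[OF u(1)] TA_phi[OF uf] .
    moreover have "a \<in> u" "imp a b \<in> u" using u(2) filter_inf_iff[OF uf] by auto
    ultimately have "b \<in> u" unfolding Dimp_def by blast
    thus False using u(3) by blast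
  qed
qed

lemma A6:
  assumes ca: "conditional_algebra imp"
  shows "(\<forall>a b. imp a b \<le> imp (- b) (- a)) \<longleftrightarrow>
      (\<forall>u\<in>Ul. \<forall>v\<in>Ul. \<forall>Y. closed_Ul Y \<longrightarrow> TA imp u Y v \<longrightarrow>
         (\<exists>w\<in>Y. TA imp u {v} w))"
proof
  assume H: "\<forall>a b. imp a b \<le> imp (- b) (- a)"
  show "\<forall>u\<in>Ul. \<forall>v\<in>Ul. \<forall>Y. closed_Ul Y \<longrightarrow> TA imp u Y v \<longrightarrow> (\<exists>w\<in>Y. TA imp u {v} w)"
  proof (intro ballI allI impI)
    fix u v Y assume u: "u \<in> Ul" and v: "v \<in> Ul" and Y: "closed_Ul Y" and T1: "TA imp u Y v"
    have uu: "ultrafilter u" using u by (simp add: Ul_uf)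
    have vv: "ultrafilter v" using v by (simp add: Ul_uf)
    have uf: "is_filter u" using uf_filter[OF uu] .
    have vf: "is_filter v" using uf_filter[OF vv] .
    obtain G where G: "is_filter G" "Y = phi G" using Y unfolding closed_Ul_def by blast
    have D1: "Dimp imp u G \<subseteq> v" using T1 TA_phi[OF G(1)] G(2) by simp
    have Dvf: "is_filter (Dimp imp u v)" by (rule D_filter[OF ca uf vf])
    have Hf: "is_filter (jn G (Dimp imp u v))" by (rule jn_filter[OF G(1) Dvf])
    have "bot \<notin> jn G (Dimp imp u v)"
    proof
      assume "bot \<in> jn G (Dimp imp u v)"
      then obtain g d where g: "g \<in> G" "d \<in> Dimp imp u v" "inf g d \<le> bot" unfolding jn_def by blast
      obtain a where a: "a \<in> v" "imp a d \<in> u" using g(2) unfolding Dimp_def by blast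
      have "inf g d = bot" using g(3) by (simp add: bot_unique)
      hence "g \<le> -d" by (simp only: inf_shunt)
      hence nd: "-d \<in> G" by (rule filter_up[OF G(1) g(1)])
      have "imp a d \<le> imp (-d) (-a)" using H by blast
      hence "imp (-d) (-a) \<in> u" by (rule filter_up[OF uf a(2)])
      hence "-a \<in> Dimp imp u G" unfolding Dimp_def using nd by blast
      hence "-a \<in> v" using D1 by blast
      thus False using a(1) uf_compl[OF vv] by blast
    qed
    then obtain w where w: "ultrafilter w" "jn G (Dimp imp u v) \<subseteq> w" using uf_thm[OF Hf] by blast
    have "G \<subseteq> w" using jn_sub1[OF Dvf, of G] w(2) by blast
    hence wY: "w \<in> Y" using G(2) w(1) by (simp add: in_phi)
    have "Dimp imp u v \<subseteq> w" using jn_sub2[OF G(1), of "Dimp imp u v"] w(2) by blast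
    hence "TA imp u {v} w" unfolding phi_uf[OF vv] TA_phi[OF vf] .
    thus "\<exists>w\<in>Y. TA imp u {v} w" using wY by blast
  qed
next
  assume H: "\<forall>u\<in>Ul. \<forall>v\<in>Ul. \<forall>Y. closed_Ul Y \<longrightarrow> TA imp u Y v \<longrightarrow> (\<exists>w\<in>Y. TA imp u {v} w)"
  show "\<forall>a b. imp a b \<le> imp (- b) (- a)"
  proof (intro allI, rule ccontr)
    fix a b assume "\<not> imp a b \<le> imp (- b) (- a)"
    then obtain u where u: "ultrafilter u" "imp a b \<in> u" "imp (-b) (-a) \<notin> u" using sep by blast
    have uf: "is_filter u" using uf_filter[OF u(1)] .
    have Df: "is_filter (Dimp imp u (up (-b)))" by (rule D_filter[OF ca uf up_filter])
    have "-a \<notin> Dimp imp u (up (-b))" using D_up[OF ca uf] u(3) by simp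
    then obtain v where v: "ultrafilter v" "Dimp imp u (up (-b)) \<subseteq> v" "-a \<notin> v"
      using uf_thm[OF Df] by blast
    have vf: "is_filter v" using uf_filter[OF v(1)] .
    have av: "a \<in> v" using v(3) uf_compl[OF v(1)] by blast
    have T1: "TA imp u (phi (up (-b))) v" using v(2) by (simp add: TA_phi[OF up_filter])
    then obtain w where w: "w \<in> phi (up (-b))" "TA imp u {v} w"
      using H[rule_format, OF Ul_uf[THEN iffD2, OF u(1)] Ul_uf[THEN iffD2, OF v(1)] closed_phi[OF up_filter] T1] by blast
    have ww: "ultrafilter w" and "up (-b) \<subseteq> w" using w(1) by (simp_all add: in_phi)
    hence nb: "-b \<in> w" using up_self by blast
    have "Dimp imp u v \<subseteq> w" using w(2) unfolding phi_uf[OF v(1)] TA_phi[OF vf] .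
    moreover have "b \<in> Dimp imp u v" unfolding Dimp_def using av u(2) by blast
    ultimately have "b \<in> w" by blast
    thus False using nb uf_compl[OF ww] by blast
  qed
qed

lemma A7:
  assumes ca: "conditional_algebra imp"
  shows "(\<forall>a b c. - imp a b \<le> imp c (- imp a b)) \<longleftrightarrow>
      (\<forall>u\<in>Ul. \<forall>v\<in>Ul. \<forall>w\<in>Ul. \<forall>Y Z. closed_Ul Y \<longrightarrow> closed_Ul Z \<longrightarrow>
         TA imp u Y v \<longrightarrow> TA imp u Z w \<longrightarrow> TA imp v Z w)"
proof
  assume H: "\<forall>a b c. - imp a b \<le> imp c (- imp a b)"
  show "\<forall>u\<in>Ul. \<forall>v\<in>Ul. \<forall>w\<in>Ul. \<forall>Y Z. closed_Ul Y \<longrightarrow> closed_Ul Z \<longrightarrow>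
         TA imp u Y v \<longrightarrow> TA imp u Z w \<longrightarrow> TA imp v Z w"
  proof (intro ballI allI impI)
    fix u v w Y Z
    assume u: "u \<in> Ul" and v: "v \<in> Ul" and w: "w \<in> Ul" and Y: "closed_Ul Y" and Z: "closed_Ul Z"
      and T1: "TA imp u Y v" and T2: "TA imp u Z w"
    have uu: "ultrafilter u" using u by (simp add: Ul_uf)
    have vv: "ultrafilter v" using v by (simp add: Ul_uf)
    obtain G where G: "is_filter G" "Y = phi G" using Y unfolding closed_Ul_def by blast
    obtain F where F: "is_filter F" "Z = phi F" using Z unfolding closed_Ul_def by blast
    have D1: "Dimp imp u G \<subseteq> v" using T1 TA_phi[OF G(1)] G(2) by simp
    have D2: "Dimp imp u F \<subseteq> w" using T2 TA_phi[OF F(1)] F(2) by simp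
    have "Dimp imp v F \<subseteq> w"
    proof
      fix b assume "b \<in> Dimp imp v F"
      then obtain a where a: "a \<in> F" "imp a b \<in> v" unfolding Dimp_def by blast
      show "b \<in> w"
      proof (rule ccontr)
        assume bw: "b \<notin> w"
        have "imp a b \<notin> u"
        proof
          assume "imp a b \<in> u"
          hence "b \<in> Dimp imp u F" unfolding Dimp_def using a(1) by blast
          thus False using D2 bw by blast
        qed
        hence nu: "- imp a b \<in> u" using uf_compl[OF uu] by blast
        have "- imp a b \<le> imp top (- imp a b)" using H by blast
        hence "imp top (- imp a b) \<in> u" by (rule filter_up[OF uf_filter[OF uu] nu])
        hence "- imp a b \<in> Dimp imp u G" unfolding Dimp_def using filter_top[OF G(1)] by blast
        hence "- imp a b \<in> v" using D1 by blast
        thus False using a(2) uf_compl[OF vv] by blast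
      qed
    qed
    thus "TA imp v Z w" using TA_phi[OF F(1)] F(2) by simp
  qed
next
  assume H: "\<forall>u\<in>Ul. \<forall>v\<in>Ul. \<forall>w\<in>Ul. \<forall>Y Z. closed_Ul Y \<longrightarrow> closed_Ul Z \<longrightarrow>
         TA imp u Y v \<longrightarrow> TA imp u Z w \<longrightarrow> TA imp v Z w"
  show "\<forall>a b c. - imp a b \<le> imp c (- imp a b)"
  proof (intro allI, rule ccontr)
    fix a b c assume "\<not> - imp a b \<le> imp c (- imp a b)"
    then obtain u where u: "ultrafilter u" "- imp a b \<in> u" "imp c (- imp a b) \<notin> u" using sep by blast
    have uf: "is_filter u" using uf_filter[OF u(1)] .
    have Df: "is_filter (Dimp imp u (up c))" by (rule D_filter[OF ca uf up_filter])
    have "- imp a b \<notin> Dimp imp u (up c)" using D_up[OF ca uf] u(3) by simp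
    then obtain v where v: "ultrafilter v" "Dimp imp u (up c) \<subseteq> v" "- imp a b \<notin> v"
      using uf_thm[OF Df] by blast
    have vf: "is_filter v" using uf_filter[OF v(1)] .
    have abv: "imp a b \<in> v" using v(3) uf_compl[OF v(1)] by blast
    have abu: "imp a b \<notin> u" using u(2) uf_compl[OF u(1)] by blast
    have Df2: "is_filter (Dimp imp u (up a))" by (rule D_filter[OF ca uf up_filter])
    have "b \<notin> Dimp imp u (up a)" using D_up[OF ca uf] abu by simp
    then obtain w where w: "ultrafilter w" "Dimp imp u (up a) \<subseteq> w" "b \<notin> w"
      using uf_thm[OF Df2] by blast
    have T1: "TA imp u (phi (up c)) v" using v(2) by (simp add: TA_phi[OF up_filter])
    have T2: "TA imp u (phi (up a)) w" using w(2) by (simp add: TA_phi[OF up_filter])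
    have "TA imp v (phi (up a)) w"
      by (rule H[rule_format, OF Ul_uf[THEN iffD2, OF u(1)] Ul_uf[THEN iffD2, OF v(1)] Ul_uf[THEN iffD2, OF w(1)] closed_phi[OF up_filter] closed_phi[OF up_filter] T1 T2])
    hence "Dimp imp v (up a) \<subseteq> w" by (simp add: TA_phi[OF up_filter])
    moreover have "b \<in> Dimp imp v (up a)" using D_up[OF ca vf] abv by simp
    ultimately show False using w(3) by blast
  qed
qed

lemma A8:
  assumes ca: "conditional_algebra imp"
  shows "(\<forall>a b c. inf (imp top (sup (- a) b)) (imp b c) \<le> imp a c) \<longleftrightarrow>
      (\<forall>u\<in>Ul. \<forall>v\<in>Ul. \<forall>Y Z. closed_Ul Y \<longrightarrow> closed_Ul Z \<longrightarrow>
         TA imp u Y v \<longrightarrow> TAset imp u Ul \<inter> Y \<subseteq> Z \<longrightarrow> TA imp u Z v)"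
proof
  assume H: "\<forall>a b c. inf (imp top (sup (- a) b)) (imp b c) \<le> imp a c"
  show "\<forall>u\<in>Ul. \<forall>v\<in>Ul. \<forall>Y Z. closed_Ul Y \<longrightarrow> closed_Ul Z \<longrightarrow>
         TA imp u Y v \<longrightarrow> TAset imp u Ul \<inter> Y \<subseteq> Z \<longrightarrow> TA imp u Z v"
  proof (intro ballI allI impI)
    fix u v Y Z
    assume u: "u \<in> Ul" and v: "v \<in> Ul" and Y: "closed_Ul Y" and Z: "closed_Ul Z"
      and T1: "TA imp u Y v" and S: "TAset imp u Ul \<inter> Y \<subseteq> Z"
    have uu: "ultrafilter u" using u by (simp add: Ul_uf)
    have uf: "is_filter u" using uf_filter[OF uu] .
    obtain G where G: "is_filter G" "Y = phi G" using Y unfolding closed_Ul_def by blast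
    obtain F where F: "is_filter F" "Z = phi F" using Z unfolding closed_Ul_def by blast
    have D1: "Dimp imp u G \<subseteq> v" using T1 TA_phi[OF G(1)] G(2) by simp
    define E where "E = Dimp imp u {top}"
    have Ef: "is_filter E" unfolding E_def by (rule D_filter[OF ca uf top_filter])
    have Jf: "is_filter (jn E G)" by (rule jn_filter[OF Ef G(1)])
    have "phi (jn E G) \<subseteq> phi E" by (rule phi_anti[OF jn_sub1[OF G(1)]])
    moreover have "phi (jn E G) \<subseteq> phi G" by (rule phi_anti[OF jn_sub2[OF Ef]])
    moreover have "phi E \<inter> phi G \<subseteq> phi F" using S TAset_eq[OF ca uu] G(2) F(2) E_def by simp
    ultimately have "phi (jn E G) \<subseteq> phi F" by blast
    hence FJ: "F \<subseteq> jn E G" by (rule phi_sub[OF F(1) Jf])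
    have "Dimp imp u F \<subseteq> v"
    proof
      fix x assume "x \<in> Dimp imp u F"
      then obtain f where f: "f \<in> F" "imp f x \<in> u" unfolding Dimp_def by blast
      have "f \<in> jn E G" using FJ f(1) by blast
      then obtain e g where eg: "e \<in> E" "g \<in> G" "inf e g \<le> f" unfolding jn_def by blast
      have eu: "imp top e \<in> u" using eg(1) unfolding E_def Dimp_def by blast
      have "e \<le> sup (-g) f" using eg(3) by (simp only: shunt1)
      hence "imp top e \<le> imp top (sup (-g) f)" by (rule ca_mono[OF ca])
      hence "imp top (sup (-g) f) \<in> u" by (rule filter_up[OF uf eu])
      hence "inf (imp top (sup (-g) f)) (imp f x) \<in> u" using f(2) by (rule filter_inf[OF uf])
      moreover have "inf (imp top (sup (-g) f)) (imp f x) \<le> imp g x" using H by blast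
      ultimately have "imp g x \<in> u" by (rule filter_up[OF uf])
      hence "x \<in> Dimp imp u G" unfolding Dimp_def using eg(2) by blast
      thus "x \<in> v" using D1 by blast
    qed
    thus "TA imp u Z v" using TA_phi[OF F(1)] F(2) by simp
  qed
next
  assume H: "\<forall>u\<in>Ul. \<forall>v\<in>Ul. \<forall>Y Z. closed_Ul Y \<longrightarrow> closed_Ul Z \<longrightarrow>
         TA imp u Y v \<longrightarrow> TAset imp u Ul \<inter> Y \<subseteq> Z \<longrightarrow> TA imp u Z v"
  show "\<forall>a b c. inf (imp top (sup (- a) b)) (imp b c) \<le> imp a c"
  proof (intro allI, rule ccontr)
    fix a b c assume "\<not> inf (imp top (sup (- a) b)) (imp b c) \<le> imp a c"
    then obtain u where u: "ultrafilter u" "inf (imp top (sup (- a) b)) (imp b c) \<in> u" "imp a c \<notin> u"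
      using sep by blast
    have uf: "is_filter u" using uf_filter[OF u(1)] .
    have P: "imp top (sup (- a) b) \<in> u" and Q: "imp b c \<in> u" using u(2) filter_inf_iff[OF uf] by auto
    have Df: "is_filter (Dimp imp u (up a))" by (rule D_filter[OF ca uf up_filter])
    have "c \<notin> Dimp imp u (up a)" using D_up[OF ca uf] u(3) by simp
    then obtain v where v: "ultrafilter v" "Dimp imp u (up a) \<subseteq> v" "c \<notin> v"
      using uf_thm[OF Df] by blast
    have T1: "TA imp u (phi (up a)) v" using v(2) by (simp add: TA_phi[OF up_filter])
    have S: "TAset imp u Ul \<inter> phi (up a) \<subseteq> phi (up b)"
    proof
      fix w assume "w \<in> TAset imp u Ul \<inter> phi (up a)"
      hence w: "ultrafilter w" "Dimp imp u {top} \<subseteq> w" "up a \<subseteq> w"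
        using TAset_eq[OF ca u(1)] by (simp_all add: in_phi)
      have wf: "is_filter w" using uf_filter[OF w(1)] .
      have "sup (-a) b \<in> Dimp imp u {top}" unfolding Dimp_def using P by blast
      hence 1: "sup (-a) b \<in> w" using w(2) by blast
      have 2: "a \<in> w" using w(3) up_self by blast
      have "inf a (sup (-a) b) \<in> w" by (rule filter_inf[OF wf 2 1])
      moreover have "inf a (sup (-a) b) \<le> b" by (simp add: inf_sup_distrib1)
      ultimately have "b \<in> w" by (rule filter_up[OF wf])
      hence "up b \<subseteq> w" unfolding up_def using filter_up[OF wf] by blast
      thus "w \<in> phi (up b)" using w(1) by (simp add: in_phi)
    qed
    have "TA imp u (phi (up b)) v"
      by (rule H[rule_format, OF Ul_uf[THEN iffD2, OF u(1)] Ul_uf[THEN iffD2, OF v(1)] closed_phi[OF up_filter] closed_phi[OF up_filter] T1 S])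
    hence "Dimp imp u (up b) \<subseteq> v" by (simp add: TA_phi[OF up_filter])
    moreover have "c \<in> Dimp imp u (up b)" using D_up[OF ca uf] Q by simp
    ultimately show False using v(3) by blast
  qed
qed

theorem theorem9p6:
  fixes imp :: "'a::boolean_algebra \<Rightarrow> 'a \<Rightarrow> 'a"
  assumes "conditional_algebra imp"
  shows
   "((\<forall>a b c. imp a b \<le> imp c (imp a b)) \<longleftrightarrow>
      (\<forall>u\<in>Ul. \<forall>v\<in>Ul. \<forall>w\<in>Ul. \<forall>Y Z. closed_Ul Y \<longrightarrow> closed_Ul Z \<longrightarrow>
         TA imp u Y v \<longrightarrow> TA imp v Z w \<longrightarrow> TA imp u Z w))
    \<and> ((\<forall>a b. inf a (imp a b) \<le> b) \<longleftrightarrow> (\<forall>u\<in>Ul. TA imp u {u} u))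
    \<and> ((\<forall>a b. imp a b \<le> imp (- b) (- a)) \<longleftrightarrow>
      (\<forall>u\<in>Ul. \<forall>v\<in>Ul. \<forall>Y. closed_Ul Y \<longrightarrow> TA imp u Y v \<longrightarrow>
         (\<exists>w\<in>Y. TA imp u {v} w)))
    \<and> ((\<forall>a b c. - imp a b \<le> imp c (- imp a b)) \<longleftrightarrow>
      (\<forall>u\<in>Ul. \<forall>v\<in>Ul. \<forall>w\<in>Ul. \<forall>Y Z. closed_Ul Y \<longrightarrow> closed_Ul Z \<longrightarrow>
         TA imp u Y v \<longrightarrow> TA imp u Z w \<longrightarrow> TA imp v Z w))
    \<and> ((\<forall>a b c. inf (imp top (sup (- a) b)) (imp b c) \<le> imp a c) \<longleftrightarrow>
      (\<forall>u\<in>Ul. \<forall>v\<in>Ul. \<forall>Y Z. closed_Ul Y \<longrightarrow> closed_Ul Z \<longrightarrow>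
         TA imp u Y v \<longrightarrow> TAset imp u Ul \<inter> Y \<subseteq> Z \<longrightarrow> TA imp u Z v))"
  by (intro conjI A4[OF assms] A5[OF assms] A6[OF assms] A7[OF assms] A8[OF assms])

end
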